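(* Let $G$ be a circle of circumference $1$, let $\mathbf{x}\in G^n$ be such that the agents are on one semicircle, and let $i\in N$, $x_i'\in G$ be such that the agents in $\mathbf{x}'=(x_i',\mathbf{x}_{-i})$ are not on one semicircle. Then $\mathrm{cost}(\mathrm{lrm}(\mathbf{x}),x_i)\le\mathrm{cost}(\mathrm{rc}(\mathbf{x}'),x_i)$.
   Context: $d(x,y)$ is the shorter-arc length; $\hat x$ the antipode of $x$; $\mathrm{cost}(P,x_i)=\mathbb{E}_{y\sim P}[d(x_i,y)]$. Agents are on one semicircle if all locations lie in some closed arc of length $1/2$. LRM: for a profile on one semicircle, fix a closed arc of minimal length containing all locations, with endpoints $l,r$; $\mathrm{lrm}$ returns $l$ w.p. $1/4$, $r$ w.p. $1/4$, and the midpoint of that arc w.p. $1/2$. RC: the antipodal points $\hat{x}_1,\dots,\hat{x}_n$ partition $G$ into arcs between cyclically consecutive antipodal points; $\mathrm{rc}$ returns the midpoint of each such arc with probability equal to its length. *)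

theory Defs
  imports "HOL-Probability.Probability"
begin

text \<open>The circle G of circumference 1 is modelled as R/Z: a point is represented by any
real number, two reals denoting the same point iff they differ by an integer.
All notions below are invariant under integer shifts (they only use frac).\<close>

definition cdist :: "real \<Rightarrow> real \<Rightarrow> real" where
  "cdist x y = min (frac (x - y)) (frac (y - x))"

definition antipode :: "real \<Rightarrow> real" where
  "antipode x = frac (x + 1/2)"

definition in_arc :: "real \<Rightarrow> real \<Rightarrow> real \<Rightarrow> bool" where
  "in_arc l L y \<longleftrightarrow> frac (y - l) \<le> L"

definition on_semicircle :: "nat \<Rightarrow> (nat \<Rightarrow> real) \<Rightarrow> bool" where
  "on_semicircle n x \<longleftrightarrow> (\<exists>l. \<forall>j<n. in_arc l (1/2) (x j))"

definition is_min_arc :: "nat \<Rightarrow> (nat \<Rightarrow> real) \<Rightarrow> real \<Rightarrow> real \<Rightarrow> bool" where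
  "is_min_arc n x l L \<longleftrightarrow> 0 \<le> L \<and> (\<forall>j<n. in_arc l L (x j)) \<and>
     (\<forall>l' L'. 0 \<le> L' \<and> (\<forall>j<n. in_arc l' L' (x j)) \<longrightarrow> L \<le> L')"

text \<open>LRM for the chosen minimal arc with endpoints l and r = l+L.\<close>
definition lrm :: "real \<Rightarrow> real \<Rightarrow> real pmf" where
  "lrm l L = pmf_of_list [(frac l, 1/4), (frac (l + L), 1/4), (frac (l + L/2), 1/2)]"

text \<open>RC: sorted distinct antipodal points a_0 < ... < a_(k-1) in [0,1); arc j goes from a_j
to a_(j+1) (cyclically, the last one to a_0 + 1).\<close>
definition antipodes :: "nat \<Rightarrow> (nat \<Rightarrow> real) \<Rightarrow> real list" where
  "antipodes n x = sorted_list_of_set ((\<lambda>j. antipode (x j)) ` {..<n})"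

definition rc_arc_end :: "real list \<Rightarrow> nat \<Rightarrow> real" where
  "rc_arc_end a j = (if Suc j < length a then a ! Suc j else a ! 0 + 1)"

definition rc :: "nat \<Rightarrow> (nat \<Rightarrow> real) \<Rightarrow> real pmf" where
  "rc n x = (let a = antipodes n x in
     pmf_of_list (map (\<lambda>j. (frac ((a ! j + rc_arc_end a j) / 2), rc_arc_end a j - a ! j))
                      [0..<length a]))"

definition cost :: "real pmf \<Rightarrow> real \<Rightarrow> real" where
  "cost P y = measure_pmf.expectation P (\<lambda>z. cdist y z)"

end

theory Submission
  imports Defs
begin


definition d0 :: "real \<Rightarrow> real" where "d0 u = min (frac u) (frac (-u))"

lemma d0_eq:
  assumes "of_int k - 1/2 \<le> u" "u \<le> of_int k + 1/2"
  shows "d0 u = \<bar>u - of_int k\<bar>"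
proof (cases "u \<ge> of_int k")
  case True
  have fl: "\<lfloor>u\<rfloor> = k" using True assms by (simp add: floor_eq_iff)
  have fu: "frac u = u - of_int k" by (simp add: frac_def fl)
  show ?thesis
  proof (cases "u = of_int k")
    case True thus ?thesis by (simp add: d0_def)
  next
    case False
    have "\<lfloor>-u\<rfloor> = -k - 1" using True False assms by (simp add: floor_eq_iff)
    hence "frac (-u) = 1 - (u - of_int k)" by (simp add: frac_def)
    thus ?thesis using fu True assms by (simp add: d0_def)
  qed
next
  case False
  have fl: "\<lfloor>u\<rfloor> = k - 1" using False assms by (simp add: floor_eq_iff)
  have fu: "frac u = u - of_int k + 1" by (simp add: frac_def fl)
  have "\<lfloor>-u\<rfloor> = -k" using False assms by (simp add: floor_eq_iff)
  hence "frac (-u) = of_int k - u" by (simp add: frac_def)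
  thus ?thesis using fu False assms by (simp add: d0_def)
qed

definition G :: "real \<Rightarrow> real" where
  "G u = of_int \<lfloor>u + 1/2\<rfloor> / 4 + (u - of_int \<lfloor>u + 1/2\<rfloor>) * \<bar>u - of_int \<lfloor>u + 1/2\<rfloor>\<bar> / 2"

lemma G_eq:
  assumes "of_int k - 1/2 \<le> u" "u \<le> of_int k + 1/2"
  shows "G u = of_int k / 4 + (u - of_int k) * \<bar>u - of_int k\<bar> / 2"
proof (cases "u = of_int k + 1/2")
  case True
  have "\<lfloor>u + 1/2\<rfloor> = k + 1" using True by simp
  thus ?thesis using True by (simp add: G_def)
next
  case False
  hence "\<lfloor>u + 1/2\<rfloor> = k" using assms by (simp add: floor_eq_iff)
  thus ?thesis by (simp add: G_def)
qed

lemma G_add1: "G (u + 1) = G u + 1/4"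
proof -
  have "\<lfloor>u + 1 + 1/2\<rfloor> = \<lfloor>u + 1/2\<rfloor> + 1" by (metis add.commute add.left_commute floor_add_int of_int_1)
  thus ?thesis by (simp add: G_def algebra_simps)
qed

lemma d0_shift: "d0 (u + of_int c) = d0 u"
proof -
  have "-(u + of_int c) = -u + of_int (-c)" by simp
  hence "frac (-(u + of_int c)) = frac (-u)" by (metis frac_add_of_int_right)
  thus ?thesis by (simp add: d0_def)
qed

lemma d0_neg: "d0 (-u) = d0 u" by (simp add: d0_def min.commute)

lemma cdist_d0: "cdist y z = d0 (z - y)"
  by (simp add: cdist_def d0_def min.commute)




lemma aux1: fixes a b :: real assumes "a \<ge> 0" "b \<ge> 0"
  shows "b\<^sup>2/2 + a\<^sup>2/2 - (min a b)\<^sup>2 \<le> (a+b) * \<bar>b - a\<bar> / 2"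
proof (cases "a \<le> b")
  case True
  hence "(a+b) * \<bar>b - a\<bar> = b\<^sup>2 - a\<^sup>2" by (simp add: power2_eq_square algebra_simps)
  thus ?thesis using True by (simp add: min_def)
next
  case False
  hence "(a+b) * \<bar>b - a\<bar> = a\<^sup>2 - b\<^sup>2" by (simp add: power2_eq_square algebra_simps)
  thus ?thesis using False by (simp add: min_def)
qed

lemma aux2: fixes P Q :: real assumes "P + Q \<le> 1"
  shows "1/4 - (1-Q)\<^sup>2/2 - P\<^sup>2/2 \<le> (Q - P) * ((P + Q)/2)"
proof -
  have "(Q - P) * ((P + Q)/2) - (1/4 - (1-Q)\<^sup>2/2 - P\<^sup>2/2) = (Q - 1/2)\<^sup>2"
    by (simp add: power2_eq_square field_simps)
  thus ?thesis by (smt (verit) zero_le_power2)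
qed

lemma aux3: fixes P Q :: real
  shows "1/4 - (1-Q)\<^sup>2/2 - P\<^sup>2/2 \<le> (Q - P) * (1 - (P + Q)/2)"
proof -
  have "(Q - P) * (1 - (P + Q)/2) - (1/4 - (1-Q)\<^sup>2/2 - P\<^sup>2/2) = (P - 1/2)\<^sup>2"
    by (simp add: power2_eq_square field_simps)
  thus ?thesis by (smt (verit) zero_le_power2)
qed

definition pen :: "real \<Rightarrow> real \<Rightarrow> real" where
  "pen p q = (if p < of_int \<lfloor>q\<rfloor> then (min (of_int \<lfloor>q\<rfloor> - p) (q - of_int \<lfloor>q\<rfloor>))\<^sup>2 else 0)"

lemma arc_ineq:
  assumes "p \<le> q" "q - p \<le> 1/2"
  shows "G q - G p - pen p q \<le> (q - p) * d0 ((p + q)/2)"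
proof -
  define K where "K = \<lfloor>q\<rfloor>"
  define k where "k = (of_int K :: real)"
  have kq: "k \<le> q" "q < k + 1" unfolding k_def K_def by linarith+
  show ?thesis
  proof (cases "p < k")
    case True
    have Gp: "G p = k/4 + (p - k) * \<bar>p - k\<bar>/2" unfolding k_def
      by (rule G_eq) (use True assms kq in \<open>auto simp: k_def\<close>)
    have Gq: "G q = k/4 + (q - k) * \<bar>q - k\<bar>/2" unfolding k_def
      by (rule G_eq) (use True assms kq in \<open>auto simp: k_def\<close>)
    have dm: "d0 ((p+q)/2) = \<bar>(p+q)/2 - k\<bar>" unfolding k_def
      by (rule d0_eq) (use True assms kq in \<open>auto simp: k_def\<close>)
    have pe: "pen p q = (min (k - p) (q - k))\<^sup>2" using True by (simp add: pen_def k_def K_def)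
    have e1: "(p - k) * \<bar>p - k\<bar> = - (k-p)\<^sup>2" using True by (simp add: power2_eq_square algebra_simps)
    have e2: "(q - k) * \<bar>q - k\<bar> = (q-k)\<^sup>2" using kq by (simp add: power2_eq_square)
    have e3: "(q - p) * \<bar>(p+q)/2 - k\<bar> = ((k-p) + (q-k)) * \<bar>(q-k) - (k-p)\<bar> / 2"
    proof -
      have "(p+q)/2 - k = ((q-k)-(k-p))/2" by (simp add: field_simps)
      hence "\<bar>(p+q)/2 - k\<bar> = \<bar>(q-k)-(k-p)\<bar>/2" by (simp only: abs_divide)
      moreover have "q - p = (k-p) + (q-k)" by simp
      ultimately show ?thesis by simp
    qed
    show ?thesis unfolding Gp Gq dm pe e1 e2 e3
      using aux1[of "k-p" "q-k"] True kq by simp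
  next
    case False
    show ?thesis
    proof (cases "q \<le> k + 1/2")
      case True
      have Gp: "G p = k/4 + (p - k) * \<bar>p - k\<bar>/2" unfolding k_def
        by (rule G_eq) (use True False assms kq in \<open>auto simp: k_def\<close>)
      have Gq: "G q = k/4 + (q - k) * \<bar>q - k\<bar>/2" unfolding k_def
        by (rule G_eq) (use True assms kq in \<open>auto simp: k_def\<close>)
      have dm: "d0 ((p+q)/2) = \<bar>(p+q)/2 - k\<bar>" unfolding k_def
        by (rule d0_eq) (use True False assms kq in \<open>auto simp: k_def\<close>)
      have pe: "pen p q = 0" using False by (simp add: pen_def k_def K_def)
      have a1: "\<bar>p-k\<bar> = p-k" "\<bar>q-k\<bar> = q-k" "\<bar>(p+q)/2 - k\<bar> = (p+q)/2 - k"
        using False True kq assms by simp_all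
      show ?thesis unfolding Gp Gq dm pe a1
        by (simp add: power2_eq_square field_simps)
    next
      case qb: False
      show ?thesis
      proof (cases "p \<ge> k + 1/2")
        case True
        have Gp: "G p = (k+1)/4 + (p - (k+1)) * \<bar>p - (k+1)\<bar>/2" unfolding k_def
          using G_eq[of "K+1" p] True kq assms by (simp add: k_def)
        have Gq: "G q = (k+1)/4 + (q - (k+1)) * \<bar>q - (k+1)\<bar>/2" unfolding k_def
          using G_eq[of "K+1" q] True kq assms by (simp add: k_def)
        have dm: "d0 ((p+q)/2) = \<bar>(p+q)/2 - (k+1)\<bar>"
          using d0_eq[of "K+1" "(p+q)/2"] True kq assms by (simp add: k_def)
        have pe: "pen p q = 0" using False by (simp add: pen_def k_def K_def)
        have e1: "(p - (k+1)) * \<bar>p - (k+1)\<bar> = - (k+1-p)\<^sup>2" using kq assms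
          by (simp add: power2_eq_square abs_if algebra_simps)
        have e2: "(q - (k+1)) * \<bar>q - (k+1)\<bar> = - (k+1-q)\<^sup>2" using kq
          by (simp add: power2_eq_square abs_if algebra_simps)
        have e3: "\<bar>(p+q)/2 - (k+1)\<bar> = (k+1) - (p+q)/2" using kq assms by simp
        show ?thesis unfolding Gp Gq dm pe e1 e2 e3
          by (simp add: power2_eq_square field_simps)
      next
        case pb: False
        have Gp: "G p = k/4 + (p - k) * \<bar>p - k\<bar>/2" unfolding k_def
          by (rule G_eq) (use pb False assms kq in \<open>auto simp: k_def\<close>)
        have Gq: "G q = (k+1)/4 + (q - (k+1)) * \<bar>q - (k+1)\<bar>/2" unfolding k_def
          using G_eq[of "K+1" q] qb kq assms by (simp add: k_def)
        have pe: "pen p q = 0" using False by (simp add: pen_def k_def K_def)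
        have e1: "(p - k) * \<bar>p - k\<bar> = (p - k)\<^sup>2" using False
          by (simp add: power2_eq_square abs_if algebra_simps)
        have e2: "(q - (k+1)) * \<bar>q - (k+1)\<bar> = - (1 - (q-k))\<^sup>2" using kq
          by (simp add: power2_eq_square abs_if algebra_simps)
        have lhs: "G q - G p - pen p q = 1/4 - (1 - (q-k))\<^sup>2/2 - (p-k)\<^sup>2/2"
          unfolding Gp Gq pe e1 e2 by (simp add: algebra_simps)
        show ?thesis
        proof (cases "(p+q)/2 \<le> k + 1/2")
          case True
          have dm: "d0 ((p+q)/2) = (p + q)/2 - k"
            using d0_eq[of "K" "(p+q)/2"] True False kq assms by (simp add: k_def)
          have "((q-k)-(p-k)) * (((p-k)+(q-k))/2) = (q-p)*((p+q)/2 - k)"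
            by (simp add: field_simps)
          moreover have "p - k + (q - k) \<le> 1" using True by (simp add: field_simps)
          ultimately show ?thesis unfolding lhs dm using aux2[of "p-k" "q-k"]
            by linarith
        next
          case mb: False
          have dm: "d0 ((p+q)/2) = (k+1) - (p + q)/2"
            using d0_eq[of "K+1" "(p+q)/2"] mb kq assms by (simp add: k_def)
          have "((q-k)-(p-k)) * (1 - ((p-k)+(q-k))/2) = (q-p)*((k+1) - (p+q)/2)"
            by (simp add: field_simps)
          then show ?thesis unfolding lhs dm using aux3[where P="p-k" and Q="q-k"]
            by linarith
        qed
      qed
    qed
  qed
qed




lemma regroup:
  assumes "finite A" "fst ` set xs \<subseteq> A"
  shows "(\<Sum>a\<in>A. sum_list (map g (filter (\<lambda>z. fst z = a) xs))) = sum_list (map g xs)"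
  using assms(2)
proof (induction xs)
  case Nil thus ?case by simp
next
  case (Cons x xs)
  have "(\<Sum>a\<in>A. sum_list (map g (filter (\<lambda>z. fst z = a) (x # xs))))
      = (\<Sum>a\<in>A. (if fst x = a then g x else 0) + sum_list (map g (filter (\<lambda>z. fst z = a) xs)))"
    by (intro sum.cong) auto
  also have "\<dots> = (\<Sum>a\<in>A. (if fst x = a then g x else 0)) + (\<Sum>a\<in>A. sum_list (map g (filter (\<lambda>z. fst z = a) xs)))"
    by (simp add: sum.distrib)
  also have "(\<Sum>a\<in>A. (if fst x = a then g x else 0)) = g x"
    using Cons.prems assms(1) by (simp add: sum.delta)
  finally show ?case using Cons by simp
qed

lemma exp_pmf_of_list:
  assumes "pmf_of_list_wf xs"
  shows "measure_pmf.expectation (pmf_of_list xs) f = sum_list (map (\<lambda>z. snd z * f (fst z)) xs)"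
proof -
  let ?A = "set (map fst xs)"
  have "measure_pmf.expectation (pmf_of_list xs) f = (\<Sum>a\<in>?A. f a * pmf (pmf_of_list xs) a)"
    by (rule integral_measure_pmf_real) (use set_pmf_of_list[OF assms] in auto)
  also have "\<dots> = (\<Sum>a\<in>?A. sum_list (map (\<lambda>z. snd z * f (fst z)) (filter (\<lambda>z. fst z = a) xs)))"
  proof (intro sum.cong refl)
    fix a
    define L where "L = filter (\<lambda>z. fst z = a) xs"
    have eq: "map (\<lambda>z. snd z * f (fst z)) L = map (\<lambda>z. f a * snd z) L"
      by (auto simp: mult.commute L_def)
    have "sum_list (map (\<lambda>z. snd z * f (fst z)) L) = sum_list (map (\<lambda>z. f a * snd z) L)"
      by (simp only: eq)
    also have "\<dots> = f a * sum_list (map snd L)" by (induction L) (auto simp: algebra_simps)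
    finally show "f a * pmf (pmf_of_list xs) a = sum_list (map (\<lambda>z. snd z * f (fst z)) (filter (\<lambda>z. fst z = a) xs))"
      by (simp add: pmf_pmf_of_list[OF assms] L_def)
  qed
  also have "\<dots> = sum_list (map (\<lambda>z. snd z * f (fst z)) xs)"
    by (rule regroup) auto
  finally show ?thesis .
qed

lemma sum_le_single:
  fixes f :: "nat \<Rightarrow> real"
  assumes "finite S" "\<And>j. j \<in> S \<Longrightarrow> 0 \<le> f j" "\<And>j. j \<in> S \<Longrightarrow> f j \<le> B" "0 \<le> B"
    "\<And>j j'. j \<in> S \<Longrightarrow> j' \<in> S \<Longrightarrow> f j \<noteq> 0 \<Longrightarrow> f j' \<noteq> 0 \<Longrightarrow> j = j'"
  shows "sum f S \<le> B"
proof (cases "\<exists>j\<in>S. f j \<noteq> 0")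
  case True
  then obtain j0 where j0: "j0 \<in> S" "f j0 \<noteq> 0" by blast
  have "sum f S = f j0 + sum f (S - {j0})" using assms(1) j0(1) by (simp add: sum.remove)
  also have "sum f (S - {j0}) = 0" using assms(5) j0 by (intro sum.neutral) blast
  finally show ?thesis using assms(3) j0 by simp
next
  case False thus ?thesis using assms(4) by simp
qed

lemma rc_bound:
  fixes a :: "real list" and y B :: real
  assumes srt: "sorted_wrt (<) a" and ne: "a \<noteq> []" and rng: "\<forall>z\<in>set a. 0 \<le> z \<and> z < 1"
    and gap: "\<forall>j<length a. rc_arc_end a j - a ! j \<le> 1/2"
    and B0: "0 \<le> B" and pB: "\<forall>j<length a. pen (a ! j - y) (rc_arc_end a j - y) \<le> B"
  shows "1/4 - B \<le> measure_pmf.expectation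
     (pmf_of_list (map (\<lambda>j. (frac ((a ! j + rc_arc_end a j) / 2), rc_arc_end a j - a ! j)) [0..<length a]))
     (\<lambda>z. cdist y z)"
proof -
  define m where "m = length a"
  define e where "e = rc_arc_end a"
  have m0: "0 < m" using ne by (simp add: m_def)
  have srt2: "\<And>i j. i < j \<Longrightarrow> j < m \<Longrightarrow> a ! i < a ! j"
    using srt by (simp add: m_def sorted_wrt_iff_nth_less)
  have srt3: "\<And>i j. i \<le> j \<Longrightarrow> j < m \<Longrightarrow> a ! i \<le> a ! j"
    using srt2 by (metis le_less)
  have rng': "\<And>j. j < m \<Longrightarrow> 0 \<le> a ! j \<and> a ! j < 1" using rng by (simp add: m_def)
  define h where "h j = (if j < m then a ! j else a ! 0 + 1)" for j
  have eh: "\<And>j. j < m \<Longrightarrow> e j = h (Suc j)"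
    by (simp add: e_def h_def rc_arc_end_def m_def)
  have e_ge: "\<And>j. j < m \<Longrightarrow> a ! j \<le> e j"
  proof -
    fix j assume j: "j < m"
    show "a ! j \<le> e j"
    proof (cases "Suc j < m")
      case True thus ?thesis using srt2[of j "Suc j"] by (simp add: eh[OF j] h_def)
    next
      case False thus ?thesis using rng'[OF j] rng'[OF m0] by (simp add: eh[OF j] h_def)
    qed
  qed
  have e_le: "\<And>j. j < m \<Longrightarrow> e j \<le> a ! 0 + 1"
  proof -
    fix j assume j: "j < m"
    show "e j \<le> a ! 0 + 1"
    proof (cases "Suc j < m")
      case True thus ?thesis using rng'[OF True] rng'[OF m0] by (simp add: eh[OF j] h_def)
    next
      case False thus ?thesis by (simp add: eh[OF j] h_def)
    qed
  qed
  have a_ge: "\<And>j. j < m \<Longrightarrow> a ! 0 \<le> a ! j" using srt3 by simp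
  have e_le2: "\<And>j j'. j < j' \<Longrightarrow> j' < m \<Longrightarrow> e j \<le> a ! j'"
    using srt3 by (simp add: eh h_def)
  have tele: "(\<Sum>j<m. F (h (Suc j)) - F (h j)) = F (a ! 0 + 1) - F (a ! 0)" for F :: "real \<Rightarrow> real"
    using sum_lessThan_telescope[of "\<lambda>j. F (h j)" m] m0 by (simp add: h_def)
  let ?xs = "map (\<lambda>j. (frac ((a ! j + e j) / 2), e j - a ! j)) [0..<m]"
  have wf: "pmf_of_list_wf ?xs"
  proof (rule pmf_of_list_wfI)
    fix w assume "w \<in> set (map snd ?xs)"
    thus "0 \<le> w" using e_ge by auto
  next
    have "sum_list (map snd ?xs) = (\<Sum>j<m. e j - a ! j)"
      by (simp add: o_def sum_list_sum_nth atLeast0LessThan)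
    also have "\<dots> = (\<Sum>j<m. h (Suc j) - h j)" by (intro sum.cong) (auto simp: eh h_def)
    also have "\<dots> = 1" using tele[of id] by simp
    finally show "sum_list (map snd ?xs) = 1" .
  qed
  have E: "measure_pmf.expectation (pmf_of_list ?xs) (\<lambda>z. cdist y z)
      = (\<Sum>j<m. (e j - a ! j) * d0 ((a ! j + e j)/2 - y))"
  proof -
    have "measure_pmf.expectation (pmf_of_list ?xs) (\<lambda>z. cdist y z)
        = (\<Sum>j<m. (e j - a ! j) * cdist y (frac ((a ! j + e j) / 2)))"
      by (simp add: exp_pmf_of_list[OF wf] o_def sum_list_sum_nth atLeast0LessThan)
    also have "\<dots> = (\<Sum>j<m. (e j - a ! j) * d0 ((a ! j + e j)/2 - y))"
    proof (intro sum.cong refl)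
      fix j
      have "frac ((a ! j + e j) / 2) - y = ((a ! j + e j)/2 - y) + of_int (- \<lfloor>(a ! j + e j) / 2\<rfloor>)"
        by (simp add: frac_def)
      hence "d0 (frac ((a ! j + e j) / 2) - y) = d0 ((a ! j + e j)/2 - y)"
        by (simp only: d0_shift)
      thus "(e j - a ! j) * cdist y (frac ((a ! j + e j) / 2)) = (e j - a ! j) * d0 ((a ! j + e j)/2 - y)"
        by (simp add: cdist_d0)
    qed
    finally show ?thesis .
  qed
  define pe where "pe j = pen (a ! j - y) (e j - y)" for j
  have trm: "\<And>j. j < m \<Longrightarrow> G (e j - y) - G (a ! j - y) - pe j \<le> (e j - a ! j) * d0 ((a ! j + e j)/2 - y)"
  proof -
    fix j assume j: "j < m"
    have "G (e j - y) - G (a ! j - y) - pen (a ! j - y) (e j - y)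
        \<le> ((e j - y) - (a ! j - y)) * d0 (((a ! j - y) + (e j - y))/2)"
      by (rule arc_ineq) (use e_ge[OF j] gap j in \<open>auto simp: e_def m_def\<close>)
    moreover have "((a ! j - y) + (e j - y))/2 = (a ! j + e j)/2 - y" by (simp add: field_simps)
    ultimately show "G (e j - y) - G (a ! j - y) - pe j \<le> (e j - a ! j) * d0 ((a ! j + e j)/2 - y)"
      unfolding pe_def by (metis diff_diff_eq2 diff_add_cancel add_diff_cancel_left')
  qed
  have sumG: "(\<Sum>j<m. G (e j - y) - G (a ! j - y)) = 1/4"
  proof -
    have "(\<Sum>j<m. G (e j - y) - G (a ! j - y)) = (\<Sum>j<m. G (h (Suc j) - y) - G (h j - y))"
      by (intro sum.cong) (auto simp: eh h_def)
    also have "\<dots> = G (a ! 0 + 1 - y) - G (a ! 0 - y)" using tele[of "\<lambda>u. G (u - y)"] by simp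
    also have "a ! 0 + 1 - y = (a ! 0 - y) + 1" by simp
    finally show ?thesis by (simp add: G_add1)
  qed
  have pe_nz: "\<And>j. pe j \<noteq> 0 \<Longrightarrow> a ! j - y < of_int \<lfloor>e j - y\<rfloor> \<and> of_int \<lfloor>e j - y\<rfloor> < e j - y"
  proof -
    fix j assume "pe j \<noteq> 0"
    hence "a ! j - y < of_int \<lfloor>e j - y\<rfloor>" "min (of_int \<lfloor>e j - y\<rfloor> - (a ! j - y)) ((e j - y) - of_int \<lfloor>e j - y\<rfloor>) \<noteq> 0"
      by (auto simp: pe_def pen_def split: if_splits)
    thus "a ! j - y < of_int \<lfloor>e j - y\<rfloor> \<and> of_int \<lfloor>e j - y\<rfloor> < e j - y"
      by (smt (verit, best) of_int_floor_le)
  qed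
  have sumP: "(\<Sum>j<m. pe j) \<le> B"
  proof (rule sum_le_single)
    fix j assume "j \<in> {..<m}" thus "pe j \<le> B" using pB by (simp add: pe_def e_def m_def)
  next
    fix j show "0 \<le> pe j" by (simp add: pe_def pen_def)
  next
    fix j j' assume jj: "j \<in> {..<m}" "j' \<in> {..<m}" "pe j \<noteq> 0" "pe j' \<noteq> 0"
    show "j = j'"
    proof (rule ccontr)
      assume "j \<noteq> j'"
      then consider "j < j'" | "j' < j" by linarith
      thus False
      proof cases
        case 1
        have A1: "a ! j - y < of_int \<lfloor>e j - y\<rfloor>" "of_int \<lfloor>e j - y\<rfloor> < e j - y" using pe_nz[OF jj(3)] by auto
        have A2: "a ! j' - y < of_int \<lfloor>e j' - y\<rfloor>" "of_int \<lfloor>e j' - y\<rfloor> < e j' - y" using pe_nz[OF jj(4)] by auto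
        have "e j \<le> a ! j'" using e_le2 1 jj by auto
        hence "\<lfloor>e j - y\<rfloor> < \<lfloor>e j' - y\<rfloor>" using A1 A2 by (smt (verit) of_int_less_iff)
        hence "of_int \<lfloor>e j - y\<rfloor> + 1 \<le> (of_int \<lfloor>e j' - y\<rfloor> :: real)" by linarith
        moreover have "a ! 0 \<le> a ! j" using a_ge jj by auto
        moreover have "e j' \<le> a ! 0 + 1" using e_le jj by auto
        ultimately show False using A1 A2 by linarith
      next
        case 2
        have A1: "a ! j' - y < of_int \<lfloor>e j' - y\<rfloor>" "of_int \<lfloor>e j' - y\<rfloor> < e j' - y" using pe_nz[OF jj(4)] by auto
        have A2: "a ! j - y < of_int \<lfloor>e j - y\<rfloor>" "of_int \<lfloor>e j - y\<rfloor> < e j - y" using pe_nz[OF jj(3)] by auto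
        have "e j' \<le> a ! j" using e_le2 2 jj by auto
        hence "\<lfloor>e j' - y\<rfloor> < \<lfloor>e j - y\<rfloor>" using A1 A2 by (smt (verit) of_int_less_iff)
        hence "of_int \<lfloor>e j' - y\<rfloor> + 1 \<le> (of_int \<lfloor>e j - y\<rfloor> :: real)" by linarith
        moreover have "a ! 0 \<le> a ! j'" using a_ge jj by auto
        moreover have "e j \<le> a ! 0 + 1" using e_le jj by auto
        ultimately show False using A1 A2 by linarith
      qed
    qed
  qed (use B0 in auto)
  have "(\<Sum>j<m. G (e j - y) - G (a ! j - y)) - (\<Sum>j<m. pe j) \<le> (\<Sum>j<m. (e j - a ! j) * d0 ((a ! j + e j)/2 - y))"
    using sum_mono[of "{..<m}" "\<lambda>j. G (e j - y) - G (a ! j - y) - pe j", OF trm]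
    by (simp add: sum_subtractf)
  hence "1/4 - B \<le> (\<Sum>j<m. (e j - a ! j) * d0 ((a ! j + e j)/2 - y))" using sumG sumP by linarith
  thus ?thesis using E by (simp add: m_def e_def)
qed




lemma list_facts:
  fixes a :: "real list"
  assumes srt: "sorted_wrt (<) a" and rng: "\<forall>z\<in>set a. 0 \<le> z \<and> z < 1" and j: "j < length a"
  shows "a ! 0 \<le> a ! j" "rc_arc_end a j \<le> a ! 0 + 1" "a ! j \<le> rc_arc_end a j"
proof -
  have srt2: "\<And>i j. i < j \<Longrightarrow> j < length a \<Longrightarrow> a ! i < a ! j"
    using srt by (simp add: sorted_wrt_iff_nth_less)
  have r: "\<And>k. k < length a \<Longrightarrow> 0 \<le> a ! k \<and> a ! k < 1" using rng by auto
  show "a ! 0 \<le> a ! j" using srt2[of 0 j] j by (cases j) auto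
  have l0: "0 < length a" using j by linarith
  have a0: "0 \<le> a ! 0" using r[OF l0] by auto
  show "rc_arc_end a j \<le> a ! 0 + 1"
    using r[of "Suc j"] a0 j by (auto simp: rc_arc_end_def)
  show "a ! j \<le> rc_arc_end a j"
    using srt2[of j "Suc j"] r[of j] a0 j by (auto simp: rc_arc_end_def)
qed

lemma no_inside:
  fixes a :: "real list"
  assumes srt: "sorted_wrt (<) a" and rng: "\<forall>z\<in>set a. 0 \<le> z \<and> z < 1" and j: "j < length a"
    and z: "z \<in> set a"
  shows "\<not> (a ! j < z + of_int c \<and> z + of_int c < rc_arc_end a j)"
proof
  assume A: "a ! j < z + of_int c \<and> z + of_int c < rc_arc_end a j"
  obtain i where i: "i < length a" "z = a ! i" using z by (auto simp: in_set_conv_nth)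
  have srt2: "\<And>i j. i < j \<Longrightarrow> j < length a \<Longrightarrow> a ! i < a ! j"
    using srt by (simp add: sorted_wrt_iff_nth_less)
  have srt3: "\<And>i j. i \<le> j \<Longrightarrow> j < length a \<Longrightarrow> a ! i \<le> a ! j"
    using srt2 by (metis le_less)
  have r: "\<And>k. k < length a \<Longrightarrow> 0 \<le> a ! k \<and> a ! k < 1" using rng by auto
  have LF: "a ! 0 \<le> a ! i" "rc_arc_end a j \<le> a ! 0 + 1" using list_facts[OF srt rng i(1)] list_facts[OF srt rng j] by auto
  consider "c = 0" | "c \<ge> 1" | "c \<le> -1" by linarith
  thus False
  proof cases
    case 1
    hence B: "a ! j < a ! i" "a ! i < rc_arc_end a j" using A i by auto
    have ji: "j < i" using B(1) srt3[of i j] j by (meson not_le leD)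
    show False
    proof (cases "Suc j < length a")
      case True
      hence "a ! i < a ! Suc j" using B(2) by (simp add: rc_arc_end_def)
      thus False using srt3[of "Suc j" i] ji i by (meson Suc_leI leD)
    next
      case False thus False using ji i by linarith
    qed
  next
    case 2
    hence "z + of_int c \<ge> a ! i + 1" using i by simp
    thus False using A LF by linarith
  next
    case 3
    hence "z + of_int c \<le> a ! i - 1" using i by simp
    thus False using A r[OF i(1)] r[OF j] by linarith
  qed
qed

lemma frac_shift_eq: "w = u + of_int c \<Longrightarrow> frac w = frac u" by simp

lemma arc_cover:
  fixes a :: "real list"
  assumes srt: "sorted_wrt (<) a" and rng: "\<forall>z\<in>set a. 0 \<le> z \<and> z < 1" and j: "j < length a"
    and z: "z \<in> set a"
  shows "frac (z - rc_arc_end a j) \<le> 1 - (rc_arc_end a j - a ! j)"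
proof -
  obtain i where i: "i < length a" "z = a ! i" using z by (auto simp: in_set_conv_nth)
  have srt2: "\<And>i j. i < j \<Longrightarrow> j < length a \<Longrightarrow> a ! i < a ! j"
    using srt by (simp add: sorted_wrt_iff_nth_less)
  have srt3: "\<And>i j. i \<le> j \<Longrightarrow> j < length a \<Longrightarrow> a ! i \<le> a ! j"
    using srt2 by (metis le_less)
  have r: "\<And>k. k < length a \<Longrightarrow> 0 \<le> a ! k \<and> a ! k < 1" using rng by auto
  show ?thesis
  proof (cases "Suc j < length a")
    case True
    hence e: "rc_arc_end a j = a ! Suc j" by (simp add: rc_arc_end_def)
    show ?thesis
    proof (cases "Suc j \<le> i")
      case True
      have "a ! Suc j \<le> a ! i" using srt3 True i by auto
      hence "frac (z - rc_arc_end a j) = a ! i - a ! Suc j"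
        using r[OF i(1)] r[of "Suc j"] \<open>Suc j < length a\<close> by (simp add: e i frac_eq)
      thus ?thesis using r[OF i(1)] r[OF j] e by simp
    next
      case False
      hence "a ! i \<le> a ! j" using srt3 j by auto
      moreover have "a ! i < a ! Suc j" using srt2[of i "Suc j"] False \<open>Suc j < length a\<close> by auto
      ultimately have "frac (z - rc_arc_end a j) = a ! i - a ! Suc j + 1"
        using r[OF i(1)] r[of "Suc j"] \<open>Suc j < length a\<close>
        by (subst frac_shift_eq[of _ "a ! i - a ! Suc j + 1" "-1"]) (simp_all add: e i frac_eq)
      thus ?thesis using \<open>a ! i \<le> a ! j\<close> e by simp
    qed
  next
    case False
    hence e: "rc_arc_end a j = a ! 0 + 1" by (simp add: rc_arc_end_def)
    have jl: "j = length a - 1" using False j by linarith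
    have "a ! 0 \<le> a ! i" "a ! i \<le> a ! j" using srt3 i j jl by auto
    moreover have "0 < length a" using j by linarith
    ultimately have "frac (z - rc_arc_end a j) = a ! i - a ! 0"
      using r[OF i(1)] r[OF j] r[of 0]
      by (subst frac_shift_eq[of _ "a ! i - a ! 0" "-1"]) (simp_all add: e i frac_eq)
    thus ?thesis using \<open>a ! i \<le> a ! j\<close> e by simp
  qed
qed




theorem mainTheorem16:
  fixes n :: nat and x :: "nat \<Rightarrow> real" and i :: nat and xi' l L :: real
  assumes "i < n"
    and "on_semicircle n x"
    and "\<not> on_semicircle n (x(i := xi'))"
    and "is_min_arc n x l L"
  shows "cost (lrm l L) (x i) \<le> cost (rc n (x(i := xi'))) (x i)"
proof -
  define x' where "x' = x(i := xi')"
  define y where "y = x i"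
  have L0: "0 \<le> L" and inarc: "\<And>j. j < n \<Longrightarrow> frac (x j - l) \<le> L"
    and minL: "\<And>l' L'. 0 \<le> L' \<Longrightarrow> (\<forall>j<n. frac (x j - l') \<le> L') \<Longrightarrow> L \<le> L'"
    using assms(4) by (auto simp: is_min_arc_def in_arc_def)
  obtain l0 where "\<forall>j<n. frac (x j - l0) \<le> 1/2"
    using assms(2) unfolding on_semicircle_def in_arc_def by blast
  hence Lhalf: "L \<le> 1/2" using minL[of "1/2" l0] by auto
  define t where "t = frac (y - l)"
  have t0: "0 \<le> t" and tL: "t \<le> L" using inarc[OF assms(1)] by (auto simp: t_def y_def)
  define c where "c = \<lfloor>y - l\<rfloor>"
  have yeq: "y = l + t + of_int c" by (simp add: t_def c_def frac_def)
  define S where "S = (\<lambda>j. frac (x j - l)) ` {..<n}"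
  have finS: "finite S" and neS: "S \<noteq> {}" and tS: "t \<in> S"
    using assms(1) by (auto simp: S_def t_def y_def)
  have ex0: "\<exists>j0<n. frac (x j0 - l) = 0"
  proof -
    define \<delta> where "\<delta> = Min S"
    have dS: "\<delta> \<in> S" using finS neS by (simp add: \<delta>_def)
    have dle: "\<And>j. j < n \<Longrightarrow> \<delta> \<le> frac (x j - l)" using finS by (auto simp: \<delta>_def S_def)
    have d0': "0 \<le> \<delta>" using dS by (auto simp: S_def)
    have dt: "\<delta> \<le> t" using finS tS by (simp add: \<delta>_def)
    have "L \<le> L - \<delta>"
    proof (rule minL[of "L - \<delta>" "l + \<delta>"])
      show "0 \<le> L - \<delta>" using dt tL by linarith
      show "\<forall>j<n. frac (x j - (l + \<delta>)) \<le> L - \<delta>"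
      proof (intro allI impI)
        fix j assume j: "j < n"
        have "x j - (l + \<delta>) = (frac (x j - l) - \<delta>) + of_int \<lfloor>x j - l\<rfloor>" by (simp add: frac_def)
        hence "frac (x j - (l + \<delta>)) = frac (frac (x j - l) - \<delta>)" by (rule frac_shift_eq)
        also have "\<dots> = frac (x j - l) - \<delta>" using dle[OF j] d0' frac_lt_1[of "x j - l"]
          by (simp add: frac_eq)
        finally show "frac (x j - (l + \<delta>)) \<le> L - \<delta>" using inarc[OF j] by linarith
      qed
    qed
    hence "\<delta> = 0" using d0' by linarith
    thus ?thesis using dS by (auto simp: S_def)
  qed
  have exL: "\<exists>j1<n. frac (x j1 - l) = L"
  proof -
    define M where "M = Max S"
    have MS: "M \<in> S" using finS neS by (simp add: M_def)
    have Mge: "\<And>j. j < n \<Longrightarrow> frac (x j - l) \<le> M" using finS by (auto simp: M_def S_def)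
    have "M \<le> L" using MS inarc by (auto simp: S_def)
    moreover have "L \<le> M" by (rule minL[of M l]) (use Mge MS in \<open>auto simp: S_def\<close>)
    ultimately show ?thesis using MS by (auto simp: S_def)
  qed
  define v where "v = L/2 + \<bar>t - L/2\<bar>"
  have vL: "v \<le> L" "0 \<le> v" using t0 tL by (auto simp: v_def)
  have cd: "cdist y (frac (l + s)) = \<bar>s - t\<bar>" if "\<bar>s - t\<bar> \<le> 1/2" for s
  proof -
    have "frac (l + s) - y = (s - t) + of_int (- \<lfloor>l + s\<rfloor> - c)" by (simp add: frac_def yeq)
    hence "d0 (frac (l + s) - y) = d0 (s - t)" by (simp only: d0_shift)
    also have "\<dots> = \<bar>s - t\<bar>"
    proof -
      have "- (1/2) \<le> s - t" "s - t \<le> 1/2" using that by linarith+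
      thus ?thesis using d0_eq[of 0 "s - t"] by simp
    qed
    finally show ?thesis by (simp add: cdist_d0)
  qed
  have lrm_cost: "cost (lrm l L) y = v/2"
  proof -
    let ?xs = "[(frac l, 1/4), (frac (l + L), 1/4), (frac (l + L/2), 1/2::real)]"
    have wf: "pmf_of_list_wf ?xs" by (rule pmf_of_list_wfI) auto
    have "cost (lrm l L) y = 1/4 * cdist y (frac (l + 0)) + 1/4 * cdist y (frac (l + L))
        + 1/2 * cdist y (frac (l + L/2))"
      by (simp add: cost_def lrm_def exp_pmf_of_list[OF wf])
    also have "\<dots> = 1/4 * \<bar>0 - t\<bar> + 1/4 * \<bar>L - t\<bar> + 1/2 * \<bar>L/2 - t\<bar>"
    proof -
      have "\<bar>L/2 - t\<bar> \<le> 1/2" using t0 tL Lhalf by linarith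
      thus ?thesis using cd[of 0] cd[of L] cd[of "L/2"] t0 tL Lhalf by simp
    qed
    also have "\<dots> = v/2"
    proof (cases "t \<le> L/2")
      case True
      hence "\<bar>L/2 - t\<bar> = L/2 - t" "\<bar>t - L/2\<bar> = L/2 - t" "\<bar>L - t\<bar> = L - t" "\<bar>0 - t\<bar> = t"
        using t0 by auto
      thus ?thesis unfolding v_def by (simp add: field_simps)
    next
      case False
      hence "\<bar>L/2 - t\<bar> = t - L/2" "\<bar>t - L/2\<bar> = t - L/2" "\<bar>L - t\<bar> = L - t" "\<bar>0 - t\<bar> = t"
        using t0 tL by auto
      thus ?thesis unfolding v_def by (simp add: field_simps)
    qed
    finally show ?thesis .
  qed
  define a where "a = antipodes n x'"
  have srt: "sorted_wrt (<) a" by (simp add: a_def antipodes_def)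
  have seta: "set a = (\<lambda>j. antipode (x' j)) ` {..<n}" by (simp add: a_def antipodes_def)
  have ne: "a \<noteq> []" using seta assms(1) by auto
  have rng: "\<forall>z\<in>set a. 0 \<le> z \<and> z < 1" using seta by (auto simp: antipode_def frac_lt_1)
  have gap: "\<forall>j<length a. rc_arc_end a j - a ! j \<le> 1/2"
  proof (rule allI, rule impI, rule ccontr)
    fix j assume j: "j < length a" and g: "\<not> rc_arc_end a j - a ! j \<le> 1/2"
    define e where "e = rc_arc_end a j"
    have "on_semicircle n x'"
      unfolding on_semicircle_def in_arc_def
    proof (intro exI[of _ "e + 1/2"] allI impI)
      fix k assume k: "k < n"
      have zin: "frac (x' k + 1/2) \<in> set a" using seta k by (auto simp: antipode_def)
      have "frac (x' k + 1/2) - e = (x' k - (e + 1/2)) + of_int (1 - \<lfloor>x' k + 1/2\<rfloor>)"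
        by (simp add: frac_def)
      hence "frac (x' k - (e + 1/2)) = frac (frac (x' k + 1/2) - e)" by (rule frac_shift_eq[symmetric])
      also have "\<dots> \<le> 1 - (e - a ! j)" using arc_cover[OF srt rng j zin] by (simp add: e_def)
      finally show "frac (x' k - (e + 1/2)) \<le> 1/2" using g by (simp add: e_def)
    qed
    thus False using assms(3) by (simp add: x'_def)
  qed
  define B where "B = (if v \<le> 3/8 then 1/16 else (1/2 - v)^2)"
  have B0: "0 \<le> B" by (simp add: B_def)
  have pB: "\<forall>j<length a. pen (a ! j - y) (rc_arc_end a j - y) \<le> B"
  proof (intro allI impI)
    fix j assume j: "j < length a"
    define e where "e = rc_arc_end a j"
    define p where "p = a ! j - y"
    define q where "q = e - y"
    define K where "K = \<lfloor>q\<rfloor>"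
    have Kq: "of_int K \<le> q" by (simp add: K_def)
    have pq: "q - p \<le> 1/2" using gap j by (simp add: p_def q_def e_def)
    show "pen (a ! j - y) (rc_arc_end a j - y) \<le> B"
    proof (cases "p < of_int K")
      case False thus ?thesis using B0 by (simp add: pen_def p_def q_def e_def K_def)
    next
      case True
      define \<mu> where "\<mu> = min (of_int K - p) (q - of_int K)"
      have pe: "pen (a ! j - y) (rc_arc_end a j - y) = \<mu>^2"
        using True by (simp add: pen_def p_def q_def e_def K_def \<mu>_def)
      have mu0: "0 \<le> \<mu>" using True Kq by (simp add: \<mu>_def)
      have mu4: "\<mu> \<le> 1/4"
        using pq min.cobounded1[of "of_int K - p" "q - of_int K"] min.cobounded2[of "of_int K - p" "q - of_int K"]
        unfolding \<mu>_def by linarith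
      show ?thesis
      proof (cases "v \<le> 3/8")
        case True
        have "\<mu>^2 \<le> (1/4)^2" by (rule power_mono[OF mu4 mu0])
        hence "\<mu>^2 \<le> 1/16" by (simp add: power2_eq_square)
        thus ?thesis using True pe by (simp add: B_def)
      next
        case vbig: False
        have "\<mu> \<le> 1/2 - v"
        proof (cases "of_int K = q")
          case True thus ?thesis using vL Lhalf by (simp add: \<mu>_def)
        next
          case Kq2: False
          hence Kq': "of_int K < q" using Kq by simp
          show ?thesis
          proof (cases "t \<ge> L/2")
            case tb: True
            hence vt: "v = t" by (simp add: v_def)
            obtain j0 where j0: "j0 < n" "frac (x j0 - l) = 0" using ex0 by blast
            have "j0 \<noteq> i"
            proof
              assume "j0 = i"
              hence "t = 0" using j0(2) by (simp add: t_def y_def)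
              thus False using vt vbig by simp
            qed
            hence xj0: "x' j0 = x j0" by (simp add: x'_def)
            define z0 where "z0 = frac (x j0 + 1/2)"
            have z0in: "z0 \<in> set a" using seta j0 xj0 by (force simp: z0_def antipode_def)
            have "q - of_int K \<le> 1/2 - t"
            proof (rule ccontr)
              assume H: "\<not> q - of_int K \<le> 1/2 - t"
              define w where "w = y + of_int K + (1/2 - t)"
              have "x j0 - l = of_int \<lfloor>x j0 - l\<rfloor>" using j0(2) by (simp add: frac_def)
              hence "w = z0 + of_int (c + K - \<lfloor>x j0 - l\<rfloor> + \<lfloor>x j0 + 1/2\<rfloor>)"
                by (simp add: w_def z0_def frac_def yeq algebra_simps)
              moreover have "a ! j < w" using True vL Lhalf vt
                by (simp add: w_def p_def)
              moreover have "w < e" using H by (simp add: w_def q_def)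
              ultimately show False using no_inside[OF srt rng j z0in, of "c + K - \<lfloor>x j0 - l\<rfloor> + \<lfloor>x j0 + 1/2\<rfloor>"] by (simp add: e_def)
            qed
            thus ?thesis using vt by (simp add: \<mu>_def)
          next
            case tb: False
            hence vt: "v = L - t" by (simp add: v_def)
            obtain j1 where j1: "j1 < n" "frac (x j1 - l) = L" using exL by blast
            have "j1 \<noteq> i"
            proof
              assume "j1 = i"
              hence "t = L" using j1(2) by (simp add: t_def y_def)
              thus False using tb t0 by simp
            qed
            hence xj1: "x' j1 = x j1" by (simp add: x'_def)
            define z1 where "z1 = frac (x j1 + 1/2)"
            have z1in: "z1 \<in> set a" using seta j1 xj1 by (force simp: z1_def antipode_def)
            have "of_int K - p \<le> 1/2 - L + t"
            proof (rule ccontr)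
              assume H: "\<not> of_int K - p \<le> 1/2 - L + t"
              define w where "w = y + of_int K - (1/2 - L + t)"
              have "x j1 - l = L + of_int \<lfloor>x j1 - l\<rfloor>" using j1(2) by (simp add: frac_def)
              hence "w = z1 + of_int (c + K - 1 - \<lfloor>x j1 - l\<rfloor> + \<lfloor>x j1 + 1/2\<rfloor>)"
                by (simp add: w_def z1_def frac_def yeq algebra_simps)
              moreover have "a ! j < w" using H by (simp add: w_def p_def)
              moreover have "w < e" using Kq' Lhalf t0 by (simp add: w_def q_def)
              ultimately show False using no_inside[OF srt rng j z1in, of "c + K - 1 - \<lfloor>x j1 - l\<rfloor> + \<lfloor>x j1 + 1/2\<rfloor>"] by (simp add: e_def)
            qed
            thus ?thesis using vt by (simp add: \<mu>_def)
          qed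
        qed
        hence "\<mu>^2 \<le> (1/2 - v)^2" by (rule power_mono[OF _ mu0])
        thus ?thesis using vbig pe by (simp add: B_def)
      qed
    qed
  qed
  have rcb: "1/4 - B \<le> cost (rc n x') y"
    unfolding cost_def rc_def Let_def a_def[symmetric]
    by (rule rc_bound[OF srt ne rng gap B0 pB])
  have "v/2 \<le> 1/4 - B"
  proof (cases "v \<le> 3/8")
    case True thus ?thesis by (simp add: B_def)
  next
    case False
    have "v * (v - 1/2) \<le> 0" using vL Lhalf by (intro mult_nonneg_nonpos) auto
    hence h: "v * v - v/2 \<le> 0" by (simp add: algebra_simps)
    have "(1/2 - v)^2 = 1/4 - v + v * v" by (simp add: power2_eq_square algebra_simps)
    thus ?thesis using False h by (simp add: B_def)
  qed
  thus ?thesis using lrm_cost rcb by (simp add: y_def x'_def)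
qed


end
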